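(* Every point $(s:t:u:v)\in\mathcal{D}_1^{(2)}$ has $t\neq0$, and the map $sym_{\mathcal{D}_1^{(2)}}:\mathcal{D}_1^{(2)}\to\mathcal{D}_1$, $(s:t:u:v)\mapsto\left(\frac{u}{t},\frac{v}{t}\right)$, is a proper holomorphic map satisfying $sym_{\mathcal{D}_1^{(2)}}\circ J=F\circ sym$ on $\mathbb{D}\times\mathbb{D}$, where $J(z,w)=(z-w:1-zw:i(1+zw):-i(z+w))$, $F(s,p)=\left(i\frac{1+p}{1-p},\,-i\frac{s}{1-p}\right)$ and $sym(z_1,z_2)=(z_1+z_2,z_1z_2)$.
   Context: $\mathbb{D}$ is the open unit disc in $\mathbb{C}$; $\mathbb{G}=\{(z_1+z_2,z_1z_2):z_1,z_2\in\mathbb{D}\}$; $\mathcal{D}_1=\{(z_1,z_2)\in\mathbb{C}^2: 1+|z_1|^2-|z_2|^2>|1+z_1^2-z_2^2|,\ \mathrm{Im}(z_1(1+\overline{z_2}))>0\}$; $F:\mathbb{G}\to\mathcal{D}_1$ and $J:\mathbb{D}\times\mathbb{D}\to\mathcal{D}_1^{(2)}$ are biholomorphisms. Points of $\mathbb{CP}^3$ are written $(s:t:u:v)$, and $\mathcal{D}_1^{(2)}=\{(1:t:u:v): |t|^2+|u|^2-|v|^2>1,\ t^2+u^2-v^2=1,\ \mathrm{Im}(u(\overline{t}+\overline{v}))>0\}\cup\{(0:t:u:v): t^2+u^2-v^2=0,\ \mathrm{Im}(u(\overline{t}+\overline{v}))>0\}$. *)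

theory Defs
  imports "HOL-Analysis.Analysis"
begin

text \<open>Points of CP^3 are modelled as equivalence classes (complex lines minus 0)
  of nonzero vectors x in complex^4, with x$1 = s, x$2 = t, x$3 = u, x$4 = v.\<close>

definition proj_point :: "complex^4 \<Rightarrow> (complex^4) set" where
  "proj_point x = {c *s x | c. c \<noteq> 0}"

definition CP3 :: "(complex^4) set set" where
  "CP3 = {proj_point x | x. x \<noteq> 0}"

definition hom :: "complex \<Rightarrow> complex \<Rightarrow> complex \<Rightarrow> complex \<Rightarrow> (complex^4) set" ("'(_ : _ : _ : _')") where
  "hom s t u v = proj_point (vector [s, t, u, v])"

text \<open>Quotient topology on CP^3: a set of points is open iff the union of the
  corresponding lines (its preimage in complex^4 minus 0) is open.\<close>
definition CP3_top :: "(complex^4) set topology" where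
  "CP3_top = topology (\<lambda>U. U \<subseteq> CP3 \<and> open (\<Union>U))"

definition holo4_on :: "(complex^4 \<Rightarrow> complex \<times> complex) \<Rightarrow> (complex^4) set \<Rightarrow> bool" where
  "holo4_on G W \<longleftrightarrow> (\<forall>y\<in>W. \<exists>L. (G has_derivative L) (at y) \<and>
      (\<forall>c v. L (c *s v) = (c * fst (L v), c * snd (L v))))"

definition holo_on_proj :: "((complex^4) set \<Rightarrow> complex \<times> complex) \<Rightarrow> (complex^4) set set \<Rightarrow> bool" where
  "holo_on_proj g X \<longleftrightarrow> (\<forall>P\<in>X. \<forall>x\<in>P. \<exists>W G. open W \<and> x \<in> W \<and> 0 \<notin> W \<and> holo4_on G W \<and>
      (\<forall>Q\<in>X. \<forall>y\<in>Q. y \<in> W \<longrightarrow> G y = g Q))"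

definition D1 :: "(complex \<times> complex) set" where
  "D1 = {(z1, z2). 1 + (cmod z1)^2 - (cmod z2)^2 > cmod (1 + z1^2 - z2^2) \<and>
                   Im (z1 * (1 + cnj z2)) > 0}"

definition D1_2 :: "(complex^4) set set" where
  "D1_2 = {(1 : t : u : v) | t u v. (cmod t)^2 + (cmod u)^2 - (cmod v)^2 > 1 \<and>
                t^2 + u^2 - v^2 = 1 \<and> Im (u * (cnj t + cnj v)) > 0}
        \<union> {(0 : t : u : v) | t u v. t^2 + u^2 - v^2 = 0 \<and> Im (u * (cnj t + cnj v)) > 0}"

definition sym_D1_2 :: "(complex^4) set \<Rightarrow> complex \<times> complex" where
  "sym_D1_2 P = (let x = (SOME x. x \<in> P) in (x$3 / x$2, x$4 / x$2))"

definition J :: "complex \<Rightarrow> complex \<Rightarrow> (complex^4) set" where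
  "J z w = (z - w : 1 - z*w : \<i> * (1 + z*w) : - \<i> * (z + w))"

definition F :: "complex \<times> complex \<Rightarrow> complex \<times> complex" where
  "F sp = (case sp of (s, p) \<Rightarrow> (\<i> * (1 + p) / (1 - p), - \<i> * s / (1 - p)))"

definition sym :: "complex \<times> complex \<Rightarrow> complex \<times> complex" where
  "sym zz = (case zz of (z1, z2) \<Rightarrow> (z1 + z2, z1 * z2))"

end

theory Submission
  imports Defs
begin

lemma vector_4 [simp]:
 "(vector [a,b,c,d] ::complex^4)$1 = a"
 "(vector [a,b,c,d] ::complex^4)$2 = b"
 "(vector [a,b,c,d] ::complex^4)$3 = c"
 "(vector [a,b,c,d] ::complex^4)$4 = d"
  unfolding vector_def by simp_all

lemma proj_scale: "c \<noteq> 0 \<Longrightarrow> proj_point (c *s x) = proj_point x"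
  unfolding proj_point_def
proof (safe)
  fix d :: complex assume "c \<noteq> 0" "d \<noteq> 0"
  then show "\<exists>e. d *s (c *s x) = e *s x \<and> e \<noteq> 0"
    by (intro exI[of _ "d*c"]) (simp add: vector_smult_assoc)
next
  fix d :: complex assume "c \<noteq> 0" "d \<noteq> 0"
  then show "\<exists>e. d *s x = e *s (c *s x) \<and> e \<noteq> 0"
    by (intro exI[of _ "d/c"]) (simp add: vector_smult_assoc)
qed

lemma proj_mem: "x \<in> proj_point x"
  unfolding proj_point_def by (auto intro: exI[of _ 1])


lemma proj_memE: "y \<in> proj_point x \<Longrightarrow> (\<And>c. c \<noteq> 0 \<Longrightarrow> y = c *s x \<Longrightarrow> thesis) \<Longrightarrow> thesis"
  unfolding proj_point_def by auto

lemma proj_memD: "y \<in> proj_point x \<Longrightarrow> proj_point y = proj_point x"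
  by (erule proj_memE) (simp add: proj_scale)

lemma sym_proj: "sym_D1_2 (proj_point x) = (x$3/x$2, x$4/x$2)"
proof -
  have "(SOME y. y \<in> proj_point x) \<in> proj_point x" using proj_mem by (rule someI)
  then obtain c where "c \<noteq> 0" "(SOME y. y \<in> proj_point x) = c *s x" by (rule proj_memE)
  then show ?thesis unfolding sym_D1_2_def Let_def by simp
qed

lemma sym_mem: "y \<in> proj_point x \<Longrightarrow> sym_D1_2 (proj_point x) = (y$3/y$2, y$4/y$2)"
  by (metis proj_memD sym_proj)

lemma part5: "cmod z < 1 \<Longrightarrow> cmod w < 1 \<Longrightarrow> sym_D1_2 (J z w) = F (sym (z, w))"
  unfolding J_def hom_def sym_proj F_def sym_def by simp


lemma key_ineq: "(cmod u)^2 - (cmod v)^2 \<le> cmod (u^2 - v^2)"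
proof -
  have "Re ((u - v) * cnj (u + v)) = (cmod u)^2 - (cmod v)^2"
    unfolding cmod_power2 by (simp add: algebra_simps power2_eq_square)
  moreover have "Re ((u - v) * cnj (u + v)) \<le> cmod ((u - v) * cnj (u + v))"
    by (rule complex_Re_le_cmod)
  moreover have "cmod ((u - v) * cnj (u + v)) = cmod (u^2 - v^2)"
  proof -
    have "cmod ((u - v) * cnj (u + v)) = cmod ((u - v) * (u + v))" by (simp only: norm_mult complex_mod_cnj)
    also have "(u - v) * (u + v) = u^2 - v^2" by (simp add: algebra_simps power2_eq_square)
    finally show ?thesis .
  qed
  ultimately show ?thesis by simp
qed

lemma real_aux:
  fixes a b c d :: real
  assumes "c^2 - d^2 = 1 + a^2 - b^2" "c*d = a*b" "b*(1+c) - a*d > 0"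
  shows "c^2 + d^2 < 1 + a^2 + b^2"
proof (rule ccontr)
  assume "\<not> ?thesis"
  then have h1: "c^2 \<ge> 1 + a^2" and h2: "d^2 \<ge> b^2" using assms(1) by linarith+
  have "(c*d)^2 = (a*b)^2" using assms(2) by simp
  then have e: "c^2*d^2 = a^2*b^2" by (simp add: power_mult_distrib)
  have "c^2*d^2 \<ge> (1+a^2)*d^2" using h1 by (simp add: mult_right_mono)
  moreover have "(1+a^2)*d^2 \<ge> (1+a^2)*b^2" using h2 by (simp add: mult_left_mono)
  ultimately have "a^2*b^2 \<ge> (1+a^2)*b^2" using e by linarith
  then have "b^2 \<le> 0" by (simp add: algebra_simps)
  then have b0: "b = 0" by simp
  then have "c^2*d^2 = 0" using e by simp
  moreover have "c^2 \<noteq> 0" using h1 by (smt (verit) zero_le_power2)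
  ultimately have "d = 0" by simp
  then show False using assms(3) b0 by simp
qed

lemma cplx_aux:
  assumes "z2^2 = 1 + z1^2" "Im (z1 * (1 + cnj z2)) > 0"
  shows "(cmod z2)^2 < 1 + (cmod z1)^2"
proof -
  obtain a b where z1: "z1 = Complex a b" by (metis complex.exhaust)
  obtain c d where z2: "z2 = Complex c d" by (metis complex.exhaust)
  have "Re (z2^2) = Re (1 + z1^2)" "Im (z2^2) = Im (1+z1^2)" using assms(1) by simp_all
  then have e1: "c^2 - d^2 = 1 + a^2 - b^2" and e2: "c*d = a*b"
    by (simp_all add: z1 z2 power2_eq_square)
  have "b*(1+c) - a*d > 0" using assms(2) by (simp add: z1 z2 algebra_simps)
  from real_aux[OF e1 e2 this] show ?thesis by (simp add: z1 z2 cmod_power2)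
qed

lemma Im_scale:
  assumes "t \<noteq> 0"
  shows "Im (u/t * (1 + cnj (v/t))) = Im (u * (cnj t + cnj v)) / (cmod t)^2"
proof -
  have "u/t * (1 + cnj (v/t)) = u * (cnj t + cnj v) / (t * cnj t)"
    using assms by (simp add: field_simps complex_cnj_divide)
  also have "t * cnj t = complex_of_real ((cmod t)^2)" by (rule complex_norm_square[symmetric])
  finally show ?thesis by (simp add: Im_divide_of_real)
qed

lemma norm_scale1:
  assumes "t \<noteq> 0"
  shows "1 + (cmod (u/t))^2 - (cmod (v/t))^2 = ((cmod t)^2 + (cmod u)^2 - (cmod v)^2) / (cmod t)^2"
  using assms by (simp add: norm_divide power_divide field_simps)

lemma norm_scale2:
  assumes "t \<noteq> 0"
  shows "cmod (1 + (u/t)^2 - (v/t)^2) = cmod (t^2 + u^2 - v^2) / (cmod t)^2"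
proof -
  have "1 + (u/t)^2 - (v/t)^2 = (t^2 + u^2 - v^2) / t^2" using assms by (simp add: field_simps)
  then show ?thesis by (simp add: norm_divide norm_power)
qed


lemma D1_iff: "(z1, z2) \<in> D1 \<longleftrightarrow> 1 + (cmod z1)^2 - (cmod z2)^2 > cmod (1 + z1^2 - z2^2) \<and>
                   Im (z1 * (1 + cnj z2)) > 0"
  unfolding D1_def by simp

lemma case1:
  assumes "(cmod t)^2 + (cmod u)^2 - (cmod v)^2 > 1" "t^2 + u^2 - v^2 = 1" "Im (u * (cnj t + cnj v)) > 0"
  shows "t \<noteq> 0 \<and> (u/t, v/t) \<in> D1"
proof -
  have t: "t \<noteq> 0"
  proof
    assume "t = 0"
    then show False using assms(1,2) key_ineq[of u v] by simp
  qed
  have tp: "(cmod t)^2 > 0" using t by simp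
  have "((cmod t)^2 + (cmod u)^2 - (cmod v)^2) / (cmod t)^2 > 1 / (cmod t)^2"
    using assms(1) tp by (simp add: divide_strict_right_mono)
  then have "1 + (cmod (u/t))^2 - (cmod (v/t))^2 > cmod (1 + (u/t)^2 - (v/t)^2)"
    using norm_scale1[OF t, of u v] norm_scale2[OF t, of u v] assms(2) by simp
  moreover have "Im (u/t * (1 + cnj (v/t))) > 0"
    using Im_scale[OF t, of u v] assms(3) tp by simp
  ultimately show ?thesis using t unfolding D1_iff by blast
qed

lemma case0:
  assumes "t^2 + u^2 - v^2 = 0" "Im (u * (cnj t + cnj v)) > 0"
  shows "t \<noteq> 0 \<and> (u/t, v/t) \<in> D1"
proof -
  have t: "t \<noteq> 0"
  proof
    assume t0: "t = 0"
    then have "u^2 = v^2" using assms(1) by simp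
    then have "u = v \<or> u = - v" by (simp add: power2_eq_iff)
    moreover have "Im (v * cnj v) = 0" by (simp add: complex_mult_cnj)
    ultimately show False using assms(2) t0 by auto
  qed
  have tp: "(cmod t)^2 > 0" using t by simp
  have e: "1 + (u/t)^2 - (v/t)^2 = 0"
    using t assms(1) by (simp add: field_simps)
  have im: "Im (u/t * (1 + cnj (v/t))) > 0"
    using Im_scale[OF t, of u v] assms(2) tp by simp
  have "(v/t)^2 = 1 + (u/t)^2" using e by (simp add: algebra_simps)
  from cplx_aux[OF this im] have "1 + (cmod (u/t))^2 - (cmod (v/t))^2 > cmod (1 + (u/t)^2 - (v/t)^2)"
    using e by simp
  then show ?thesis using t im unfolding D1_iff by blast
qed


lemma vec4_eq: "(x::complex^4) = y \<longleftrightarrow> x$1 = y$1 \<and> x$2 = y$2 \<and> x$3 = y$3 \<and> x$4 = y$4"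
  by (simp add: vec_eq_iff forall_4)

lemma normalize_pt:
  assumes "t \<noteq> 0"
  shows "proj_point (vector [s,t,u,v]) = proj_point (vector [s/t, 1, u/t, v/t])"
proof -
  have "vector [s/t, 1, u/t, v/t] = (1/t) *s (vector [s,t,u,v] :: complex^4)"
    using assms by (simp add: vec4_eq)
  then show ?thesis using assms by (simp add: proj_scale)
qed



lemma mem_D1_2: "P \<in> D1_2 \<longleftrightarrow>
  (\<exists>t u v. P = (1 : t : u : v) \<and> (cmod t)^2 + (cmod u)^2 - (cmod v)^2 > 1 \<and>
                t^2 + u^2 - v^2 = 1 \<and> Im (u * (cnj t + cnj v)) > 0) \<or>
  (\<exists>t u v. P = (0 : t : u : v) \<and> t^2 + u^2 - v^2 = 0 \<and> Im (u * (cnj t + cnj v)) > 0)"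
  unfolding D1_2_def by (simp only: Un_iff mem_Collect_eq)
lemma D1_2_elim:
  assumes "P \<in> D1_2"
  shows "\<exists>\<sigma> z1 z2. P = proj_point (vector [\<sigma>, 1, z1, z2]) \<and> \<sigma>^2 = 1 + z1^2 - z2^2 \<and> (z1, z2) \<in> D1"
proof -
  obtain s t u v where P: "P = (s : t : u : v)" and st: "s^2 = t^2 + u^2 - v^2"
    and tD: "t \<noteq> 0 \<and> (u/t, v/t) \<in> D1"
  proof -
    consider (a) t u v where "P = (1 : t : u : v)" "(cmod t)^2 + (cmod u)^2 - (cmod v)^2 > 1"
         "t^2 + u^2 - v^2 = 1" "Im (u * (cnj t + cnj v)) > 0"
      | (b) t u v where "P = (0 : t : u : v)" "t^2 + u^2 - v^2 = 0" "Im (u * (cnj t + cnj v)) > 0"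
      using assms unfolding mem_D1_2 by metis
    then show thesis
    proof cases
      case a
      show thesis by (rule that[OF a(1)]) (use a case1 in simp_all)
    next
      case b
      show thesis by (rule that[OF b(1)]) (use b case0 in simp_all)
    qed
  qed
  show ?thesis
  proof (intro exI conjI)
    show "P = proj_point (vector [s/t, 1, u/t, v/t])" using P normalize_pt[of t s u v] tD unfolding hom_def by simp
    show "(s/t)^2 = 1 + (u/t)^2 - (v/t)^2" using tD st by (simp add: power_divide add_divide_distrib diff_divide_distrib)
    show "(u/t, v/t) \<in> D1" using tD by simp
  qed
qed

lemma D1_2_intro:
  assumes "(z1, z2) \<in> D1" "\<sigma>^2 = 1 + z1^2 - z2^2"
  shows "proj_point (vector [\<sigma>, 1, z1, z2]) \<in> D1_2"
proof (cases "\<sigma> = 0")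
  case True
  have "proj_point (vector [\<sigma>, 1, z1, z2]) = (0 : 1 : z1 : z2)" using True unfolding hom_def by simp
  moreover have "1^2 + z1^2 - z2^2 = 0" using assms(2) True by simp
  moreover have "Im (z1 * (cnj 1 + cnj z2)) > 0" using assms(1) unfolding D1_iff by simp
  ultimately show ?thesis unfolding mem_D1_2 by metis
next
  case False
  have sp: "(cmod \<sigma>)^2 > 0" using False by simp
  have eq: "proj_point (vector [\<sigma>, 1, z1, z2]) = (1 : 1/\<sigma> : z1/\<sigma> : z2/\<sigma>)"
    using normalize_pt[where t="1/\<sigma>" and s=1 and u="z1/\<sigma>" and v="z2/\<sigma>"] False unfolding hom_def by simp
  have "(1/\<sigma>)^2 + (z1/\<sigma>)^2 - (z2/\<sigma>)^2 = (1 + z1^2 - z2^2)/\<sigma>^2"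
    by (simp add: power_divide add_divide_distrib diff_divide_distrib)
  also have "\<dots> = 1" using assms(2) False by (simp flip: assms(2))
  finally have a: "(1/\<sigma>)^2 + (z1/\<sigma>)^2 - (z2/\<sigma>)^2 = 1" .
  have "(cmod (1/\<sigma>))^2 + (cmod (z1/\<sigma>))^2 - (cmod (z2/\<sigma>))^2
      = (1 + (cmod z1)^2 - (cmod z2)^2) / (cmod \<sigma>)^2"
    by (simp add: norm_divide power_divide diff_divide_distrib add_divide_distrib)
  also have "\<dots> > cmod (1 + z1^2 - z2^2) / (cmod \<sigma>)^2"
    using assms(1) sp unfolding D1_iff by (simp add: divide_strict_right_mono)
  also have "cmod (1 + z1^2 - z2^2) = (cmod \<sigma>)^2" by (simp add: norm_power flip: assms(2))
  finally have b: "(cmod (1/\<sigma>))^2 + (cmod (z1/\<sigma>))^2 - (cmod (z2/\<sigma>))^2 > 1" using sp by simp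
  have "z1/\<sigma> * (cnj (1/\<sigma>) + cnj (z2/\<sigma>)) = z1 * (1 + cnj z2) / (\<sigma> * cnj \<sigma>)"
    using False by (simp add: field_simps complex_cnj_divide)
  also have "\<sigma> * cnj \<sigma> = complex_of_real ((cmod \<sigma>)^2)" by (rule complex_norm_square[symmetric])
  finally have "Im (z1/\<sigma> * (cnj (1/\<sigma>) + cnj (z2/\<sigma>))) = Im (z1 * (1 + cnj z2)) / (cmod \<sigma>)^2"
    by (simp add: Im_divide_of_real)
  then have c: "Im (z1/\<sigma> * (cnj (1/\<sigma>) + cnj (z2/\<sigma>))) > 0" using assms(1) sp unfolding D1_iff by simp
  show ?thesis unfolding eq mem_D1_2 using a b c by metis
qed



lemma CP3_mem: "P \<in> CP3 \<Longrightarrow> \<exists>x. x \<noteq> 0 \<and> P = proj_point x"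
  unfolding CP3_def by auto

lemma proj_nz: "x \<noteq> 0 \<Longrightarrow> y \<in> proj_point x \<Longrightarrow> y \<noteq> 0"
  by (erule proj_memE) (auto simp: vec_eq_iff)

lemma Union_CP3: "\<Union>CP3 = - {0}"
proof
  show "\<Union>CP3 \<subseteq> - {0}" using CP3_mem proj_nz by blast
  show "- {0} \<subseteq> \<Union>CP3" unfolding CP3_def using proj_mem by blast
qed

lemma CP3_same: "P \<in> CP3 \<Longrightarrow> x \<in> P \<Longrightarrow> P = proj_point x"
  using CP3_mem proj_memD by metis

lemma istop1:
  assumes S: "S \<subseteq> CP3 \<and> open (\<Union>S)" and T: "T \<subseteq> CP3 \<and> open (\<Union>T)"
  shows "S \<inter> T \<subseteq> CP3 \<and> open (\<Union>(S \<inter> T))"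
proof -
  have "\<Union>(S \<inter> T) = \<Union>S \<inter> \<Union>T"
  proof
    show "\<Union>(S \<inter> T) \<subseteq> \<Union>S \<inter> \<Union>T" by blast
    show "\<Union>S \<inter> \<Union>T \<subseteq> \<Union>(S \<inter> T)"
    proof
      fix x assume "x \<in> \<Union>S \<inter> \<Union>T"
      then obtain P Q where "P \<in> S" "Q \<in> T" "x \<in> P" "x \<in> Q" by blast
      moreover then have "P = Q" using S T CP3_same by (metis subsetD)
      ultimately show "x \<in> \<Union>(S \<inter> T)" by blast
    qed
  qed
  then show ?thesis using S T by auto
qed

lemma istop2:
  fixes K :: "(complex^4) set set set"
  assumes "\<forall>S\<in>K. S \<subseteq> CP3 \<and> open (\<Union>S)"
  shows "\<Union>K \<subseteq> CP3 \<and> open (\<Union>(\<Union>K))"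
proof -
  have "\<Union>(\<Union>K) = (\<Union>S\<in>K. \<Union>S)" by blast
  then show ?thesis using assms by (auto intro!: open_UN)
qed

lemma istop: "istopology (\<lambda>U. U \<subseteq> CP3 \<and> open (\<Union>U))"
  unfolding istopology_def using istop1 istop2 by blast

lemma openin_CP3: "openin CP3_top U \<longleftrightarrow> U \<subseteq> CP3 \<and> open (\<Union>U)"
  unfolding CP3_top_def using istop by simp

lemma topspace_CP3: "topspace CP3_top = CP3"
proof -
  have "openin CP3_top CP3" unfolding openin_CP3 Union_CP3 by auto
  then have "CP3 \<subseteq> topspace CP3_top" by (rule openin_subset)
  moreover have "topspace CP3_top \<subseteq> CP3" using openin_CP3 openin_topspace by blast
  ultimately show ?thesis by blast
qed

lemma cont_proj: "continuous_map (subtopology euclidean (- {0})) CP3_top proj_point"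
  unfolding continuous_map_def
proof (intro conjI allI impI)
  show "proj_point \<in> topspace (subtopology euclidean (- {0})) \<rightarrow> topspace CP3_top"
    unfolding topspace_CP3 by (auto simp: CP3_def)
next
  fix U assume U: "openin CP3_top U"
  have "{x \<in> topspace (subtopology euclidean (- {0})). proj_point x \<in> U} = \<Union>U \<inter> - {0}"
  proof (intro set_eqI iffI)
    fix x assume "x \<in> {x \<in> topspace (subtopology euclidean (- {0})). proj_point x \<in> U}"
    then show "x \<in> \<Union>U \<inter> - {0}" using proj_mem by auto
  next
    fix x assume x: "x \<in> \<Union>U \<inter> - {0}"
    then obtain P where "P \<in> U" "x \<in> P" by blast
    moreover then have "P = proj_point x" using U CP3_same unfolding openin_CP3 by blast
    ultimately show "x \<in> {x \<in> topspace (subtopology euclidean (- {0})). proj_point x \<in> U}"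
      using x by auto
  qed
  then show "openin (subtopology euclidean (- {0})) {x \<in> topspace (subtopology euclidean (- {0})). proj_point x \<in> U}"
    using U unfolding openin_CP3 openin_subtopology by auto
qed


lemma part1: "P \<in> D1_2 \<Longrightarrow> x \<in> P \<Longrightarrow> x$2 \<noteq> 0"
proof -
  assume P: "P \<in> D1_2" and x: "x \<in> P"
  obtain \<sigma> z1 z2 where "P = proj_point (vector [\<sigma>, 1, z1, z2])" using D1_2_elim[OF P] by blast
  with x obtain c where "c \<noteq> 0" "x = c *s vector [\<sigma>, 1, z1, z2]" by (metis proj_memE)
  then show ?thesis by simp
qed

lemma part2: "P \<in> D1_2 \<Longrightarrow> sym_D1_2 P \<in> D1"
proof -
  assume P: "P \<in> D1_2"
  obtain \<sigma> z1 z2 where "P = proj_point (vector [\<sigma>, 1, z1, z2])" "(z1, z2) \<in> D1" using D1_2_elim[OF P] by blast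
  then show ?thesis by (simp add: sym_proj)
qed

lemma comp_aux: "cmod z \<le> 1 + (cmod z)^2"
proof -
  have "0 \<le> (cmod z - 1/2)^2 + 3/4" by simp
  then show ?thesis by (simp add: power2_eq_square algebra_simps)
qed

lemma part4:
  assumes K: "compact K" "K \<subseteq> D1"
  shows "compactin CP3_top {P\<in>D1_2. sym_D1_2 P \<in> K}"
proof -
  define C where "C = {x::complex^4. x$2 = 1 \<and> (x$3, x$4) \<in> K \<and> (x$1)^2 = 1 + (x$3)^2 - (x$4)^2}"
  have C_eq: "C = {x. x$2 = 1} \<inter> ((\<lambda>x. (x$3, x$4)) -` K) \<inter> {x. (x$1)^2 = 1 + (x$3)^2 - (x$4)^2}"
    unfolding C_def by auto
  have c1: "continuous_on UNIV (\<lambda>x::complex^4. x$i)" for i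
    by (intro continuous_on_component continuous_on_id)
  have "closed {x::complex^4. x$2 = 1}"
    by (rule closed_Collect_eq[OF c1 continuous_on_const])
  moreover have "closed ((\<lambda>x::complex^4. (x$3, x$4)) -` K)"
  proof (rule continuous_closed_vimage)
    show "closed K" using K by (simp add: compact_imp_closed)
    fix x :: "complex^4"
    have "continuous_on UNIV (\<lambda>x::complex^4. (x$3, x$4))"
      by (intro continuous_on_Pair c1)
    then show "continuous (at x) (\<lambda>x::complex^4. (x$3, x$4))"
      using continuous_on_eq_continuous_at[OF open_UNIV] by blast
  qed
  moreover have "closed {x::complex^4. (x$1)^2 = 1 + (x$3)^2 - (x$4)^2}"
    by (intro closed_Collect_eq continuous_intros c1)
  ultimately have "closed C" unfolding C_eq by (intro closed_Int)
  obtain B where B: "\<And>p. p \<in> K \<Longrightarrow> norm p \<le> B"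
    using compact_imp_bounded[OF K(1)] unfolding bounded_iff by blast
  define M where "M = 3 + 2 * B^2 + \<bar>B\<bar>"
  have "bounded C" unfolding bounded_iff
  proof (intro exI ballI)
    fix x assume x: "x \<in> C"
    then have k: "(x$3, x$4) \<in> K" and x2: "x$2 = 1" and x1: "(x$1)^2 = 1 + (x$3)^2 - (x$4)^2"
      unfolding C_def by auto
    have n3: "cmod (x$3) \<le> B" using B[OF k] norm_fst_le[of "x$3" "x$4"] by linarith
    have n4: "cmod (x$4) \<le> B" using B[OF k] norm_snd_le[of "x$4" "x$3"] by linarith
    have "(cmod (x$3))^2 \<le> B^2" using n3 by (simp add: power_mono)
    moreover have "(cmod (x$4))^2 \<le> B^2" using n4 by (simp add: power_mono)
    moreover have "(cmod (x$1))^2 \<le> 1 + (cmod (x$3))^2 + (cmod (x$4))^2"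
    proof -
      have "(cmod (x$1))^2 = cmod (1 + (x$3)^2 - (x$4)^2)" by (simp flip: x1 add: norm_power)
      also have "\<dots> \<le> cmod (1 + (x$3)^2) + cmod ((x$4)^2)" by (rule norm_triangle_ineq4)
      also have "\<dots> \<le> 1 + cmod ((x$3)^2) + cmod ((x$4)^2)"
        using norm_triangle_ineq[of 1 "(x$3)^2"] by simp
      finally show ?thesis by (simp add: norm_power)
    qed
    ultimately have n1: "cmod (x$1) \<le> M" unfolding M_def using comp_aux[of "x$1"] by linarith
    have m3: "cmod (x$3) \<le> M" unfolding M_def using n3 abs_ge_self[of B] zero_le_power2[of B] by linarith
    have m4: "cmod (x$4) \<le> M" unfolding M_def using n4 abs_ge_self[of B] zero_le_power2[of B] by linarith
    have m2: "cmod (x$2) \<le> M" unfolding M_def using x2 abs_ge_zero[of B] zero_le_power2[of B] by simp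
    have "\<forall>i. cmod (x$i) \<le> M"
      unfolding forall_4 using n1 m2 m3 m4 by blast
    then have "sum (\<lambda>i. cmod (x$i)) UNIV \<le> of_nat (card (UNIV::4 set)) * M"
      by (intro sum_bounded_above) auto
    moreover have "norm x \<le> sum (\<lambda>i. cmod (x$i)) UNIV"
      unfolding norm_vec_def by (rule L2_set_le_sum) simp
    ultimately show "norm x \<le> 4 * M" by simp
  qed
  have "compact C" using \<open>closed C\<close> \<open>bounded C\<close> by (simp add: compact_eq_bounded_closed)
  moreover have "C \<subseteq> - {0}" unfolding C_def by (auto simp: vec_eq_iff)
  ultimately have "compactin (subtopology euclidean (- {0})) C"
    by (simp add: compactin_subtopology)
  from image_compactin[OF this cont_proj] have "compactin CP3_top (proj_point ` C)" .
  moreover have "proj_point ` C = {P\<in>D1_2. sym_D1_2 P \<in> K}"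
  proof (intro set_eqI iffI)
    fix P assume "P \<in> proj_point ` C"
    then obtain x where x: "x \<in> C" "P = proj_point x" by blast
    then have k: "(x$3, x$4) \<in> K" and x2: "x$2 = 1" and x1: "(x$1)^2 = 1 + (x$3)^2 - (x$4)^2"
      unfolding C_def by auto
    have xv: "x = vector [x$1, 1, x$3, x$4]" using x2 by (simp add: vec4_eq)
    have "proj_point (vector [x$1, 1, x$3, x$4]) \<in> D1_2"
      using D1_2_intro[OF _ x1] k K(2) by blast
    moreover have "sym_D1_2 P \<in> K" using k x2 by (simp add: x(2) sym_proj)
    ultimately show "P \<in> {P\<in>D1_2. sym_D1_2 P \<in> K}" using x(2) xv by simp
  next
    fix P assume P: "P \<in> {P\<in>D1_2. sym_D1_2 P \<in> K}"
    then obtain \<sigma> z1 z2 where e: "P = proj_point (vector [\<sigma>, 1, z1, z2])" "\<sigma>^2 = 1 + z1^2 - z2^2"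
      using D1_2_elim by blast
    then have "(z1, z2) \<in> K" using P by (simp add: sym_proj)
    then have "vector [\<sigma>, 1, z1, z2] \<in> C" unfolding C_def using e(2) by simp
    then show "P \<in> proj_point ` C" using e(1) by blast
  qed
  ultimately show ?thesis by simp
qed


lemma nth_deriv: "((\<lambda>x::complex^4. x$i) has_derivative (\<lambda>h. h$i)) (at y)"
  by (rule bounded_linear_imp_has_derivative[OF bounded_linear_vec_nth])

lemma holo_G: "holo4_on (\<lambda>y. (y$3/y$2, y$4/y$2)) {y. y$2 \<noteq> 0}"
  unfolding holo4_on_def
proof (intro ballI exI conjI allI)
  fix y :: "complex^4" assume "y \<in> {y. y$2 \<noteq> 0}"
  then have y: "y$2 \<noteq> 0" by simp
  show "((\<lambda>y. (y$3/y$2, y$4/y$2)) has_derivative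
     (\<lambda>h. ((h$3 * y$2 - y$3 * h$2)/(y$2*y$2), (h$4 * y$2 - y$4 * h$2)/(y$2*y$2)))) (at y)"
    by (intro has_derivative_Pair has_derivative_divide' nth_deriv y)
  fix c :: complex and v :: "complex^4"
  show "(\<lambda>h. ((h$3 * y$2 - y$3 * h$2)/(y$2*y$2), (h$4 * y$2 - y$4 * h$2)/(y$2*y$2))) (c *s v) =
    (c * fst ((\<lambda>h. ((h$3 * y$2 - y$3 * h$2)/(y$2*y$2), (h$4 * y$2 - y$4 * h$2)/(y$2*y$2))) v),
     c * snd ((\<lambda>h. ((h$3 * y$2 - y$3 * h$2)/(y$2*y$2), (h$4 * y$2 - y$4 * h$2)/(y$2*y$2))) v))"
    by (simp add: algebra_simps)
qed

lemma part3: "holo_on_proj sym_D1_2 D1_2"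
  unfolding holo_on_proj_def
proof (intro ballI)
  fix P x assume P: "P \<in> D1_2" and x: "x \<in> P"
  show "\<exists>W G. open W \<and> x \<in> W \<and> 0 \<notin> W \<and> holo4_on G W \<and>
      (\<forall>Q\<in>D1_2. \<forall>y\<in>Q. y \<in> W \<longrightarrow> G y = sym_D1_2 Q)"
  proof (intro exI conjI ballI impI)
    have c1: "continuous_on UNIV (\<lambda>x::complex^4. x$2)"
      by (intro continuous_on_component continuous_on_id)
    show "open {y::complex^4. y$2 \<noteq> 0}" by (rule open_Collect_neq[OF c1 continuous_on_const])
    show "x \<in> {y::complex^4. y$2 \<noteq> 0}" using part1[OF P x] by simp
    show "0 \<notin> {y::complex^4. y$2 \<noteq> 0}" by simp
    show "holo4_on (\<lambda>y. (y$3/y$2, y$4/y$2)) {y. y$2 \<noteq> 0}" by (rule holo_G)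
    fix Q y assume Q: "Q \<in> D1_2" and y: "y \<in> Q"
    obtain q where "Q = proj_point q" using D1_2_elim[OF Q] by blast
    then show "(\<lambda>y. (y$3/y$2, y$4/y$2)) y = sym_D1_2 Q"
      using sym_mem y by simp
  qed
qed

theorem theorem4p9:
  shows "(\<forall>P\<in>D1_2. \<forall>x\<in>P. x$2 \<noteq> 0)
    \<and> sym_D1_2 ` D1_2 \<subseteq> D1
    \<and> holo_on_proj sym_D1_2 D1_2
    \<and> (\<forall>K. compact K \<and> K \<subseteq> D1 \<longrightarrow> compactin CP3_top {P\<in>D1_2. sym_D1_2 P \<in> K})
    \<and> (\<forall>z w. cmod z < 1 \<and> cmod w < 1 \<longrightarrow> sym_D1_2 (J z w) = F (sym (z, w)))"
  using part1 part2 part3 part4 part5 by blast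


end
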